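(* Let $R$ be an associative unital division ring over a field $F$ of characteristic $0$ with a derivation $'$ (vanishing on $F$), let $\lambda\in F$, and let $\theta_n\in R$ be invertible for all $n\in\mathbb{Z}$. Define $$\mathcal{L}_n=\begin{pmatrix}\lambda-\theta_n'\theta_n^{-1} & -\theta_n\\ \theta_n^{-1} & 0\end{pmatrix},\qquad \mathcal{M}_n=\begin{pmatrix}0 & -\theta_n\\ \theta_{n-1}^{-1} & -\lambda\end{pmatrix}.$$ If $(\theta_n'\theta_n^{-1})'=\theta_{n+1}\theta_n^{-1}-\theta_n\theta_{n-1}^{-1}$ for all $n$, then $\mathcal{L}_n'=\mathcal{M}_{n+1}\mathcal{L}_n-\mathcal{L}_n\mathcal{M}_n$ for all $n$, where $'$ acts entrywise. *)

theory Defs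
  imports "HOL-Analysis.Analysis"
begin

definition mat2 :: "'a::zero \<Rightarrow> 'a \<Rightarrow> 'a \<Rightarrow> 'a \<Rightarrow> 'a^2^2" where
  "mat2 a b c d = vector [vector [a, b], vector [c, d]]"

definition mat_deriv :: "('a \<Rightarrow> 'a) \<Rightarrow> 'a^2^2 \<Rightarrow> 'a^2^2" where
  "mat_deriv D A = (\<chi> i j. D (A $ i $ j))"

text \<open>F is a subfield of the division ring R lying in its centre (R is an F-algebra).\<close>
definition central_subfield :: "'a::division_ring set \<Rightarrow> bool" where
  "central_subfield F \<longleftrightarrow> 0 \<in> F \<and> 1 \<in> F \<and>
     (\<forall>x\<in>F. \<forall>y\<in>F. x + y \<in> F \<and> x - y \<in> F \<and> x * y \<in> F) \<and>
     (\<forall>x\<in>F. inverse x \<in> F) \<and>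
     (\<forall>x\<in>F. \<forall>y. x * y = y * x)"

definition is_derivation_over :: "'a::ring set \<Rightarrow> ('a \<Rightarrow> 'a) \<Rightarrow> bool" where
  "is_derivation_over F D \<longleftrightarrow>
     (\<forall>x y. D (x + y) = D x + D y) \<and>
     (\<forall>x y. D (x * y) = D x * y + x * D y) \<and>
     (\<forall>c\<in>F. D c = 0)"

end

theory Submission
  imports Defs
begin

lemma mat2_nth: "mat2 a b c d $ 1 $ 1 = a" "mat2 a b c d $ 1 $ 2 = b"
  "mat2 a b c d $ 2 $ 1 = c" "mat2 a b c d $ 2 $ 2 = d"
  by (simp_all add: mat2_def)

lemma mat2_mult: "mat2 a b c d ** mat2 e f g h
   = mat2 (a*e + b*g) (a*f + b*h) (c*e + d*g) (c*f + d*h)"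
  by (simp add: matrix_matrix_mult_def mat2_def sum_2 vec_eq_iff forall_2)

lemma mat2_minus: "mat2 a b c d - mat2 e f g h = mat2 (a-e) (b-f) (c-g) (d-h)"
  by (simp add: mat2_def vec_eq_iff forall_2)

lemma mat2_deriv: "mat_deriv D (mat2 a b c d) = mat2 (D a) (D b) (D c) (D d)"
  by (simp add: mat_deriv_def mat2_def vec_eq_iff forall_2)

lemma mat2_eq: "mat2 a b c d = mat2 e f g h \<longleftrightarrow> a = e \<and> b = f \<and> c = g \<and> d = h"
  by (simp add: mat2_def vec_eq_iff forall_2)

theorem proposition4p8:
  fixes F :: "'r::division_ring set" and D :: "'r \<Rightarrow> 'r"
    and lam :: 'r and \<theta> :: "int \<Rightarrow> 'r"
  assumes F: "central_subfield F"
    and char0: "CHAR('r) = 0"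
    and D: "is_derivation_over F D"
    and lam: "lam \<in> F"
    and inv: "\<And>n. \<theta> n \<noteq> 0"
    and hyp: "\<And>n. D (D (\<theta> n) * inverse (\<theta> n))
                 = \<theta> (n + 1) * inverse (\<theta> n) - \<theta> n * inverse (\<theta> (n - 1))"
  shows "\<forall>n::int.
     mat_deriv D (mat2 (lam - D (\<theta> n) * inverse (\<theta> n)) (- \<theta> n) (inverse (\<theta> n)) 0)
     = mat2 0 (- \<theta> (n + 1)) (inverse (\<theta> n)) (- lam)
         ** mat2 (lam - D (\<theta> n) * inverse (\<theta> n)) (- \<theta> n) (inverse (\<theta> n)) 0
       - mat2 (lam - D (\<theta> n) * inverse (\<theta> n)) (- \<theta> n) (inverse (\<theta> n)) 0
         ** mat2 0 (- \<theta> n) (inverse (\<theta> (n - 1))) (- lam)"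
proof
  fix n :: int
  have add: "\<And>x y. D (x + y) = D x + D y" and mul: "\<And>x y. D (x * y) = D x * y + x * D y"
    and cst: "\<And>c. c \<in> F \<Longrightarrow> D c = 0" using D by (auto simp: is_derivation_over_def)
  have comm: "\<And>y. lam * y = y * lam" using F lam by (auto simp: central_subfield_def)
  have D0: "D 0 = 0" using add[of 0 0] by simp
  have Dneg: "\<And>x. D (- x) = - D x" using add D0 by (metis add.right_inverse add_eq_0_iff)
  have Dsub: "\<And>x y. D (x - y) = D x - D y" by (simp only: diff_conv_add_uminus add Dneg)
  have Dlam: "D lam = 0" using cst lam by blast
  have D1: "D 1 = 0" using cst F by (auto simp: central_subfield_def)
  define t where "t = \<theta> n"
  define u where "u = inverse t"
  have tu: "t * u = 1" "u * t = 1" using inv[of n] by (simp_all add: t_def u_def)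
  have "D (t * u) = 0" using tu D1 by simp
  then have "D t * u + t * D u = 0" using mul by simp
  then have "u * (D t * u + t * D u) = 0" by (metis mult_zero_right)
  then have "u * D t * u + (u * t) * D u = 0" by (simp only: distrib_left mult.assoc)
  then have h: "u * D t * u + D u = 0" using tu(2) by (simp only: mult_1_left)
  have Du: "D u = - (u * D t * u)" using h by (metis add.commute eq_neg_iff_add_eq_0)
  have e1: "- (D t * u * t) = - D t" using tu by (simp add: mult.assoc)
  show "mat_deriv D (mat2 (lam - D (\<theta> n) * inverse (\<theta> n)) (- \<theta> n) (inverse (\<theta> n)) 0)
     = mat2 0 (- \<theta> (n + 1)) (inverse (\<theta> n)) (- lam)
         ** mat2 (lam - D (\<theta> n) * inverse (\<theta> n)) (- \<theta> n) (inverse (\<theta> n)) 0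
       - mat2 (lam - D (\<theta> n) * inverse (\<theta> n)) (- \<theta> n) (inverse (\<theta> n)) 0
         ** mat2 0 (- \<theta> n) (inverse (\<theta> (n - 1))) (- lam)"
    unfolding mat2_deriv mat2_mult mat2_minus mat2_eq t_def[symmetric] u_def[symmetric]
  proof (intro conjI)
    show "D (lam - D t * u) = 0 * (lam - D t * u) + - \<theta> (n + 1) * u - ((lam - D t * u) * 0 + - t * inverse (\<theta> (n - 1)))"
      using hyp[of n] Dlam by (simp add: Dsub t_def u_def)
    show "D (- t) = 0 * - t + - \<theta> (n + 1) * 0 - ((lam - D t * u) * - t + - t * - lam)"
    proof -
      have "(lam - D t * u) * - t + - t * - lam = - (lam * t) + D t * u * t + t * lam"
        by (simp add: algebra_simps)
      also have "\<dots> = D t" using comm[of t] tu(2) by (simp add: mult.assoc tu(1))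
      finally show ?thesis by (simp add: Dneg)
    qed
    show "D u = u * (lam - D t * u) + - lam * u - (u * 0 + 0 * inverse (\<theta> (n - 1)))"
    proof -
      have "u * (lam - D t * u) + - lam * u - (u * 0 + 0 * inverse (\<theta> (n - 1))) = u * lam - u * D t * u - lam * u"
        by (simp add: algebra_simps)
      also have "\<dots> = - (u * D t * u)" using comm[of u] by simp
      finally show ?thesis using Du by simp
    qed
    show "D 0 = u * - t + - lam * 0 - (u * - t + 0 * - lam)" using D0 by simp
  qed
qed

end
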